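(* Let $n$ be a positive integer and $x\in\Gamma_n$. Then \[ \xi_n\bigl(\sigma_{\mathrm{RF}}(x)\bigr)=n-\tfrac12+\tfrac12\,\#_{\mathrm{dl}}(x)+\tfrac12\,W_{\mathrm{tot}}(G_x). \]
   Context: Let $[n]=\{1,\dots,n\}$. $\Gamma_n$ is the set of words $x=(x_1,\dots,x_{2n})\in[n]^{2n}$ in which every symbol of $[n]$ occurs exactly twice. Colours are formal symbols $r,b$. $[\,\cdot\,]$ is the Iverson bracket. For $f\in\{r,b\}^{2n}$, $\xi_n(f)=\sum_{i=1}^{2n-1}[f_i\neq f_{i+1}]$. The red-first colouring $\sigma_{\mathrm{RF}}(x)$ has $i$-th entry $r$ if $x_i\notin\{x_1,\dots,x_{i-1}\}$ and $b$ otherwise. For $i\in[2n-1]$, $\eta(x,i)=[x_{i+1}\in\{x_1,\dots,x_i\}]\oplus[x_i\in\{x_1,\dots,x_{i-1}\}]$. For $e\subseteq[n]$, $\theta_x(e)=-\sum_{i=1}^{2n-1}(-1)^{\eta(x,i)}\delta_{e,\{x_i,x_{i+1}\}}$. The BPSP graph $G_x=(V_x,E_x,W_x)$ has $V_x=[n]$, $E_x=\{\{x_i,x_{i+1}\}: i\in[2n-1],\ x_i\neq x_{i+1},\ \theta_x(\{x_i,x_{i+1}\})\neq0\}$, $W_x=\theta_x|_{E_x}$; $W_{\mathrm{tot}}(G_x)=\sum_{e\in E_x}W_x(e)$. $\#_{\mathrm{dl}}(x)=|\{i\in[2n-1]:x_i=x_{i+1}\}|$. *)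

theory Defs
  imports Complex_Main
begin

(* Words are lists of length 2n; list index j (0-based) corresponds to paper index j+1. *)

definition Gamma :: "nat \<Rightarrow> nat list set" where
  "Gamma n = {x. length x = 2 * n \<and> (\<forall>a\<in>{1..n}. count_list x a = 2) \<and> set x \<subseteq> {1..n}}"

datatype colour = r | b

definition xi :: "colour list \<Rightarrow> nat" where
  "xi f = card {i. i + 1 < length f \<and> f ! i \<noteq> f ! (i + 1)}"

definition sigma_RF :: "nat list \<Rightarrow> colour list" where
  "sigma_RF x = map (\<lambda>i. if x ! i \<notin> set (take i x) then r else b) [0..<length x]"

definition eta :: "nat list \<Rightarrow> nat \<Rightarrow> bool" where
  "eta x j = ((x ! (j + 1) \<in> set (take (j + 1) x)) \<noteq> (x ! j \<in> set (take j x)))"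

definition theta :: "nat list \<Rightarrow> nat set \<Rightarrow> int" where
  "theta x e = - (\<Sum>j<length x - 1. (if eta x j then -1 else 1) *
                    (if e = {x ! j, x ! (j + 1)} then 1 else 0))"

definition bpsp_vertices :: "nat \<Rightarrow> nat set" where
  "bpsp_vertices n = {1..n}"

definition bpsp_edges :: "nat list \<Rightarrow> nat set set" where
  "bpsp_edges x = {{x ! j, x ! (j + 1)} | j. j < length x - 1 \<and> x ! j \<noteq> x ! (j + 1)
                     \<and> theta x {x ! j, x ! (j + 1)} \<noteq> 0}"

definition bpsp_weight :: "nat list \<Rightarrow> nat set \<Rightarrow> int" where
  "bpsp_weight x e = theta x e"

definition W_tot :: "nat list \<Rightarrow> int" where
  "W_tot x = (\<Sum>e\<in>bpsp_edges x. bpsp_weight x e)"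

definition num_dl :: "nat list \<Rightarrow> nat" where
  "num_dl x = card {j. j < length x - 1 \<and> x ! j = x ! (j + 1)}"

end

theory Submission
  imports Defs
begin

lemma xi_eq: "xi (sigma_RF x) = card {j. j < length x - 1 \<and> eta x j}"
proof -
  have "{i. i + 1 < length (sigma_RF x) \<and> sigma_RF x ! i \<noteq> sigma_RF x ! (i + 1)}
        = {j. j < length x - 1 \<and> eta x j}"
    by (auto simp: sigma_RF_def eta_def split: if_splits)
  then show ?thesis by (simp add: xi_def)
qed

lemma dl_eta:
  assumes "x \<in> Gamma n" "j < length x - 1" "x ! j = x ! (j + 1)"
  shows "eta x j"
proof -
  let ?a = "x ! j"
  have jl: "j + 1 < length x" using assms(2) by simp
  have "?a \<in> set x" using jl by simp
  then have ain: "?a \<in> {1..n}" using assms(1) unfolding Gamma_def by blast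
  then have c2: "count_list x ?a = 2" using assms(1) unfolding Gamma_def by auto
  have dj: "drop j x = ?a # ?a # drop (j+2) x"
    using jl assms(3)
    by (metis Cons_nth_drop_Suc Suc_eq_plus1 add_Suc_right one_add_one Suc_lessD)
  have "x = take j x @ drop j x" by simp
  then have "count_list x ?a = count_list (take j x) ?a + count_list (drop j x) ?a"
    by (metis count_list_append)
  also have "count_list (drop j x) ?a = 2 + count_list (drop (j+2) x) ?a"
    by (subst dj) simp
  finally have "count_list (take j x) ?a = 0" using c2 by simp
  then have n1: "?a \<notin> set (take j x)" by (simp add: count_list_0_iff)
  have "x ! (j+1) \<in> set (take (j+1) x)"
    using jl assms(3) by (metis in_set_conv_nth length_take less_add_one min.absorb4 nth_take Suc_lessD)
  then show ?thesis using n1 unfolding eta_def by simp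
qed

lemma W_eq:
  fixes x :: "nat list"
  defines "m \<equiv> length x - 1"
  defines "s \<equiv> (\<lambda>j. if eta x j then -1 else 1 :: int)"
  defines "D \<equiv> {j\<in>{..<m}. x ! j \<noteq> x ! (j+1)}"
  shows "W_tot x = - (\<Sum>j\<in>D. s j)"
proof -
  define pr where "pr = (\<lambda>j. {x ! j, x ! (j+1)})"
  define E' where "E' = pr ` D"
  have fE': "finite E'" unfolding E'_def D_def by simp
  have sub: "bpsp_edges x \<subseteq> E'"
    unfolding bpsp_edges_def E'_def D_def pr_def m_def by auto
  have z: "\<forall>e\<in>E' - bpsp_edges x. theta x e = 0"
    unfolding bpsp_edges_def E'_def D_def pr_def m_def by auto
  have "W_tot x = (\<Sum>e\<in>E'. theta x e)"
    unfolding W_tot_def bpsp_weight_def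
    by (rule sum.mono_neutral_left[OF fE' sub z])
  also have "\<dots> = - (\<Sum>e\<in>E'. \<Sum>j<m. s j * (if e = pr j then 1 else 0))"
    unfolding theta_def s_def pr_def m_def by (simp add: sum_negf)
  also have "\<dots> = - (\<Sum>j<m. \<Sum>e\<in>E'. s j * (if e = pr j then 1 else 0))"
    by (subst sum.swap) simp
  also have "\<dots> = - (\<Sum>j<m. if pr j \<in> E' then s j else 0)"
  proof -
    have "\<And>j. (\<Sum>e\<in>E'. s j * (if e = pr j then 1 else 0)) = (if pr j \<in> E' then s j else 0)"
    proof -
      fix j
      have "(\<Sum>e\<in>E'. s j * (if e = pr j then 1 else 0)) = (\<Sum>e\<in>E'. if e = pr j then s j else 0)"
        by (rule sum.cong) auto
      also have "\<dots> = (if pr j \<in> E' then s j else 0)" by (rule sum.delta[OF fE', of "pr j" "\<lambda>_. s j"])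
      finally show "(\<Sum>e\<in>E'. s j * (if e = pr j then 1 else 0)) = (if pr j \<in> E' then s j else 0)" .
    qed
    then show ?thesis by simp
  qed
  also have "\<dots> = - (\<Sum>j<m. if x ! j \<noteq> x ! (j+1) then s j else 0)"
  proof -
    have "\<And>j. j < m \<Longrightarrow> (pr j \<in> E') = (x ! j \<noteq> x ! (j+1))"
      unfolding E'_def D_def pr_def by (auto simp: doubleton_eq_iff)
    then show ?thesis by (intro arg_cong[where f=uminus] sum.cong) auto
  qed
  also have "\<dots> = - (\<Sum>j\<in>D. s j)"
    unfolding D_def by (rule arg_cong[where f=uminus], rule sum.inter_filter[OF finite_lessThan, symmetric])
  finally show ?thesis .
qed

theorem corollary1:
  fixes n :: nat and x :: "nat list"
  assumes "n > 0" and "x \<in> Gamma n"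
  shows "real (xi (sigma_RF x)) = real n - 1/2 + (1/2) * real (num_dl x) + (1/2) * real_of_int (W_tot x)"
proof -
  define m where "m = length x - 1"
  define s where "s = (\<lambda>j. if eta x j then -1 else 1 :: int)"
  define D where "D = {j\<in>{..<m}. x ! j \<noteq> x ! (j+1)}"
  have len: "length x = 2 * n" using assms(2) by (simp add: Gamma_def)
  have mI: "int m = 2 * int n - 1" using len assms(1) unfolding m_def by simp
  have W: "W_tot x = - (\<Sum>j\<in>D. s j)" using W_eq unfolding m_def s_def D_def by simp
  have X: "xi (sigma_RF x) = card {j\<in>{..<m}. eta x j}"
    using xi_eq unfolding m_def by (metis (no_types, lifting) Collect_cong lessThan_iff)
  have ND: "num_dl x = card {j\<in>{..<m}. x ! j = x ! (j+1)}"
    unfolding num_dl_def m_def by (metis (no_types, lifting) Collect_cong lessThan_iff)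
  have cardsum: "\<And>P. int (card {j\<in>{..<m}. P j}) = (\<Sum>j<m. if P j then 1 else 0)"
    by (simp add: sum.inter_filter[symmetric])
  have S1: "(\<Sum>j<m. s j) = int m - 2 * int (card {j\<in>{..<m}. eta x j})"
  proof -
    have "(\<Sum>j<m. s j) = (\<Sum>j<m. 1 - 2 * (if eta x j then 1 else 0))"
      unfolding s_def by (rule sum.cong) auto
    also have "\<dots> = int m - 2 * (\<Sum>j<m. if eta x j then 1 else 0)"
      by (simp add: sum_subtractf sum_distrib_left)
    finally show ?thesis using cardsum[of "eta x"] by simp
  qed
  have S2: "(\<Sum>j<m. s j) = (\<Sum>j\<in>D. s j) - int (num_dl x)"
  proof -
    have "(\<Sum>j<m. s j) = (\<Sum>j<m. (if x ! j \<noteq> x ! (j+1) then s j else 0)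
                              + (if x ! j = x ! (j+1) then -1 else 0))"
    proof (rule sum.cong)
      fix j assume "j \<in> {..<m}"
      then have "x ! j = x ! (j+1) \<Longrightarrow> eta x j" using dl_eta[OF assms(2)] unfolding m_def by simp
      then show "s j = (if x ! j \<noteq> x ! (j+1) then s j else 0) + (if x ! j = x ! (j+1) then -1 else 0)"
        unfolding s_def by auto
    qed simp
    also have "\<dots> = (\<Sum>j<m. if x ! j \<noteq> x ! (j+1) then s j else 0)
                  - (\<Sum>j<m. if x ! j = x ! (j+1) then 1 else 0)"
    proof -
      have "(\<Sum>j<m. if x ! j = x ! (j+1) then -1 else 0) = - (\<Sum>j<m. if x ! j = x ! (j+1) then 1 else (0::int))"
        by (simp add: sum_negf[symmetric] if_distrib cong: if_cong)
      then show ?thesis by (simp only: sum.distrib)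
    qed
    also have "(\<Sum>j<m. if x ! j \<noteq> x ! (j+1) then s j else 0) = (\<Sum>j\<in>D. s j)"
      unfolding D_def by (rule sum.inter_filter[OF finite_lessThan, symmetric])
    finally show ?thesis using ND cardsum[of "\<lambda>j. x ! j = x ! (j+1)"] by simp
  qed
  have "2 * int (xi (sigma_RF x)) = 2 * int n - 1 + int (num_dl x) + W_tot x"
    using S1 S2 W X mI by linarith
  then have "2 * real (xi (sigma_RF x)) = 2 * real n - 1 + real (num_dl x) + real_of_int (W_tot x)"
    by (metis (mono_tags, opaque_lifting) of_int_add of_int_diff of_int_mult of_int_of_nat_eq of_int_numeral of_int_1)
  then show ?thesis by simp
qed

end
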